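(* A countable abelian group $\Gamma$ is algebraically $C^*$-unique if and only if it is locally finite, i.e. if and only if every element of $\Gamma$ has finite order.
   Context: A countable discrete group $\Gamma$ is called algebraically $C^*$-unique if its complex group algebra $\mathbb{C}\Gamma$ admits exactly one $C^*$-norm (a norm satisfying $\|a^*a\|=\|a\|^2$). A group is locally finite if every finitely generated subgroup is finite. *)

theory Defs
  imports "HOL-Analysis.Analysis" "HOL-Library.Poly_Mapping"
begin

text \<open>The complex group algebra of an abelian group 'g (written additively) is the type
  of finitely supported functions from 'g to complex; the library's multiplication on this
  type is convolution (lookup (a*b) x = sum over y+z=x of a y * b z), i.e. the group algebra product.\<close>

lift_definition gstar :: "('g::ab_group_add \<Rightarrow>\<^sub>0 complex) \<Rightarrow> ('g \<Rightarrow>\<^sub>0 complex)"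
  is "\<lambda>f x. cnj (f (- x))"
proof -
  fix f :: "'g \<Rightarrow> complex"
  assume "finite {x. f x \<noteq> 0}"
  then have "finite (uminus ` {x. f x \<noteq> 0})" by simp
  moreover have "{x. cnj (f (- x)) \<noteq> 0} = uminus ` {x. f x \<noteq> 0}"
    by (force simp: image_iff)
  ultimately show "finite {x. cnj (f (- x)) \<noteq> 0}" by simp
qed

lift_definition gscale :: "complex \<Rightarrow> ('g \<Rightarrow>\<^sub>0 complex) \<Rightarrow> ('g \<Rightarrow>\<^sub>0 complex)"
  is "\<lambda>c f x. c * f x"
  by (simp add: finite_subset)

definition cstar_norm :: "(('g::ab_group_add \<Rightarrow>\<^sub>0 complex) \<Rightarrow> real) \<Rightarrow> bool" where
  "cstar_norm N \<longleftrightarrow>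
     (\<forall>a. 0 \<le> N a) \<and> (\<forall>a. N a = 0 \<longleftrightarrow> a = 0) \<and>
     (\<forall>a b. N (a + b) \<le> N a + N b) \<and>
     (\<forall>c a. N (gscale c a) = cmod c * N a) \<and>
     (\<forall>a b. N (a * b) \<le> N a * N b) \<and>
     (\<forall>a. N (gstar a * a) = (N a)\<^sup>2)"

definition alg_cstar_unique :: "'g::ab_group_add itself \<Rightarrow> bool" where
  "alg_cstar_unique _ \<longleftrightarrow> (\<exists>!N :: ('g \<Rightarrow>\<^sub>0 complex) \<Rightarrow> real. cstar_norm N)"

definition gen_subgroup :: "'g::ab_group_add set \<Rightarrow> 'g set" where
  "gen_subgroup S = \<Inter>{H. S \<subseteq> H \<and> 0 \<in> H \<and> (\<forall>a\<in>H. \<forall>b\<in>H. a - b \<in> H)}"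

definition locally_finite :: "'g::ab_group_add itself \<Rightarrow> bool" where
  "locally_finite _ \<longleftrightarrow> (\<forall>S :: 'g set. finite S \<longrightarrow> finite (gen_subgroup S))"

definition nsmul :: "nat \<Rightarrow> 'g::ab_group_add \<Rightarrow> 'g" where
  "nsmul n x = ((+) x ^^ n) 0"

definition torsion_group :: "'g::ab_group_add itself \<Rightarrow> bool" where
  "torsion_group _ \<longleftrightarrow> (\<forall>x :: 'g. \<exists>n>0. nsmul n x = 0)"

end

theory Submission imports Defs begin
abbreviation "keys \<equiv> Poly_Mapping.keys"
abbreviation "lookup \<equiv> Poly_Mapping.lookup"
abbreviation "single \<equiv> Poly_Mapping.single"

definition is_char :: "('g::ab_group_add \<Rightarrow> complex) \<Rightarrow> bool" where
  "is_char ch \<longleftrightarrow> (\<forall>x y. ch (x+y) = ch x * ch y) \<and> (\<forall>x. cmod (ch x) = 1)"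

definition chat :: "('g::ab_group_add \<Rightarrow> complex) \<Rightarrow> ('g \<Rightarrow>\<^sub>0 complex) \<Rightarrow> complex" where
  "chat ch a = (\<Sum>g\<in>keys a. lookup a g * ch g)"

lemma char_add: "is_char ch \<Longrightarrow> ch (x+y) = ch x * ch y" by (simp add: is_char_def)
lemma char_norm: "is_char ch \<Longrightarrow> cmod (ch x) = 1" by (simp add: is_char_def)
lemma char_nz: "is_char ch \<Longrightarrow> ch x \<noteq> 0" using char_norm[of ch x] by auto
lemma char_zero: "is_char ch \<Longrightarrow> ch 0 = 1"
  using char_add[of ch 0 0] char_nz[of ch 0] by simp
lemma unit_cnj: "cmod z = 1 \<Longrightarrow> cnj z * z = 1"
  using complex_norm_square[of z] by (simp add: mult.commute)
lemma char_neg: "is_char ch \<Longrightarrow> ch (-x) = cnj (ch x)"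
proof -
  assume c: "is_char ch"
  have "ch (-x) * ch x = 1" using char_add[OF c, of "-x" x] char_zero[OF c] by simp
  moreover have "cnj (ch x) * ch x = 1" using unit_cnj char_norm[OF c] by blast
  ultimately have "ch (-x) * ch x = cnj (ch x) * ch x" by simp
  then show ?thesis using char_nz[OF c, of x] by simp
qed
lemma char_diff: "is_char ch \<Longrightarrow> ch (x - y) = ch x * cnj (ch y)"
  by (metis char_add char_neg diff_conv_add_uminus)

lemma nsmul_0[simp]: "nsmul 0 x = 0" by (simp add: nsmul_def)
lemma nsmul_Suc: "nsmul (Suc n) x = x + nsmul n x" by (simp add: nsmul_def)
lemma nsmul_add: "nsmul (m+n) x = nsmul m x + nsmul n x"
  by (induct m) (simp_all add: nsmul_Suc add.assoc)
lemma nsmul_mult: "nsmul (m*n) x = nsmul m (nsmul n x)"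
  by (induct m) (simp_all add: nsmul_Suc nsmul_add)
lemma nsmul_1[simp]: "nsmul 1 x = x" by (simp add: nsmul_def)
lemma nsmul_Suc0[simp]: "nsmul (Suc 0) x = x" by (simp add: nsmul_def)
lemma nsmul_zero[simp]: "nsmul n (0::'g::ab_group_add) = 0" by (induct n) (simp_all add: nsmul_Suc)
lemma nsmul_plus: "nsmul n (x + y) = nsmul n x + nsmul n (y::'g::ab_group_add)"
  by (induct n) (simp_all add: nsmul_Suc algebra_simps)
lemma nsmul_minus: "nsmul n (- x) = - nsmul n (x::'g::ab_group_add)"
  by (induct n) (simp_all add: nsmul_Suc algebra_simps)
lemma char_nsmul: "is_char ch \<Longrightarrow> ch (nsmul n x) = ch x ^ n"
  by (induct n) (simp_all add: nsmul_Suc char_add char_zero)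

lemma chat_superset: "finite A \<Longrightarrow> keys a \<subseteq> A \<Longrightarrow> chat ch a = (\<Sum>g\<in>A. lookup a g * ch g)"
  unfolding chat_def by (rule sum.mono_neutral_left) (auto simp: in_keys_iff)

lemma chat_add: "chat ch (a + b) = chat ch a + chat ch b"
proof -
  let ?A = "keys a \<union> keys b"
  have "chat ch (a+b) = (\<Sum>g\<in>?A. lookup (a+b) g * ch g)"
    by (rule chat_superset) (auto simp: keys_add)
  also have "\<dots> = (\<Sum>g\<in>?A. lookup a g * ch g) + (\<Sum>g\<in>?A. lookup b g * ch g)"
    by (simp add: lookup_add distrib_right sum.distrib)
  also have "\<dots> = chat ch a + chat ch b"
    by (simp add: chat_superset[of "keys a \<union> keys b"])
  finally show ?thesis .
qed
lemma chat_zero[simp]: "chat ch 0 = 0" by (simp add: chat_def)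
lemma chat_sum: "chat ch (sum f A) = (\<Sum>x\<in>A. chat ch (f x))"
  by (induct A rule: infinite_finite_induct) (simp_all add: chat_add)
lemma chat_single[simp]: "chat ch (single g c) = c * ch g"
  by (simp add: chat_def)
lemma pm_expand: "a = (\<Sum>g\<in>keys a. single g (lookup a g))"
proof (rule poly_mapping_eqI)
  fix k
  show "lookup a k = lookup (\<Sum>g\<in>keys a. single g (lookup a g)) k"
    unfolding lookup_sum
    by (cases "k \<in> keys a") (simp_all add: lookup_single when_def in_keys_iff)
qed

lemma chat_mult: "is_char ch \<Longrightarrow> chat ch (a * b) = chat ch a * chat ch b"
proof -
  assume c: "is_char ch"
  have "a * b = (\<Sum>g\<in>keys a. single g (lookup a g)) * (\<Sum>h\<in>keys b. single h (lookup b h))"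
    using pm_expand[of a] pm_expand[of b] by simp
  also have "\<dots> = (\<Sum>g\<in>keys a. \<Sum>h\<in>keys b. single (g+h) (lookup a g * lookup b h))"
    by (simp add: sum_product mult_single)
  finally have "chat ch (a*b) = (\<Sum>g\<in>keys a. \<Sum>h\<in>keys b. (lookup a g * ch g) * (lookup b h * ch h))"
    by (simp add: chat_sum char_add[OF c] algebra_simps)
  also have "\<dots> = chat ch a * chat ch b" by (simp add: chat_def sum_product)
  finally show ?thesis .
qed

lemma lookup_gstar: "lookup (gstar a) x = cnj (lookup a (-x))"
  by (simp add: gstar.rep_eq)
lemma lookup_gscale: "lookup (gscale c a) x = c * lookup a x"
  by (simp add: gscale.rep_eq)

lemma chat_gstar: "is_char ch \<Longrightarrow> chat ch (gstar a) = cnj (chat ch a)"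
proof -
  assume c: "is_char ch"
  have "chat ch (gstar a) = (\<Sum>g\<in>uminus ` keys a. lookup (gstar a) g * ch g)"
    by (rule chat_superset) (auto simp: in_keys_iff lookup_gstar image_iff intro!: bexI[of _ "- _"])
  also have "\<dots> = (\<Sum>h\<in>keys a. cnj (lookup a h) * ch (-h))"
    by (subst sum.reindex) (auto simp: inj_on_def lookup_gstar)
  also have "\<dots> = cnj (chat ch a)"
    by (simp add: chat_def char_neg[OF c])
  finally show ?thesis .
qed

lemma chat_gscale: "chat ch (gscale c a) = c * chat ch a"
proof -
  have "chat ch (gscale c a) = (\<Sum>g\<in>keys a. lookup (gscale c a) g * ch g)"
    by (rule chat_superset) (auto simp: in_keys_iff lookup_gscale)
  then show ?thesis by (simp add: lookup_gscale chat_def sum_distrib_left algebra_simps)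
qed

lemma chat_one: "is_char ch \<Longrightarrow> chat ch 1 = 1"
  by (metis chat_single char_zero mult_1 single_one)

lemma chat_uminus: "chat ch (- a) = - chat ch a"
  by (metis add_eq_0_iff chat_add chat_zero neg_eq_iff_add_eq_0)
lemma chat_diff: "chat ch (a - b) = chat ch a - chat ch b"
  by (metis chat_add chat_uminus diff_conv_add_uminus)
lemma chat_prod: "is_char ch \<Longrightarrow> chat ch (prod f A) = (\<Prod>x\<in>A. chat ch (f x))"
  by (induct A rule: infinite_finite_induct) (simp_all add: chat_mult chat_one)
lemma chat_power: "is_char ch \<Longrightarrow> chat ch (a ^ n) = chat ch a ^ n"
  by (induct n) (simp_all add: chat_mult chat_one)


definition pc :: "('g::ab_group_add \<times> complex) set \<Rightarrow> bool" where
  "pc R \<longleftrightarrow> (0,1) \<in> R \<and> (\<forall>a u b v. (a,u)\<in>R \<longrightarrow> (b,v)\<in>R \<longrightarrow> (a-b, u * cnj v) \<in> R)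
     \<and> (\<forall>a u v. (a,u)\<in>R \<longrightarrow> (a,v)\<in>R \<longrightarrow> u = v) \<and> (\<forall>a u. (a,u)\<in>R \<longrightarrow> cmod u = 1)"

lemma pc_0: "pc R \<Longrightarrow> (0,1) \<in> R" by (simp add: pc_def)
lemma pc_diff: "pc R \<Longrightarrow> (a,u)\<in>R \<Longrightarrow> (b,v)\<in>R \<Longrightarrow> (a-b, u * cnj v) \<in> R" by (simp add: pc_def)
lemma pc_sv: "pc R \<Longrightarrow> (a,u)\<in>R \<Longrightarrow> (a,v)\<in>R \<Longrightarrow> u = v" by (simp add: pc_def)
lemma pc_unit: "pc R \<Longrightarrow> (a,u)\<in>R \<Longrightarrow> cmod u = 1" by (simp add: pc_def)
lemma pc_neg: "pc R \<Longrightarrow> (b,v)\<in>R \<Longrightarrow> (-b, cnj v) \<in> R"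
  using pc_diff[of R 0 1 b v] pc_0[of R] by simp
lemma pc_add: "pc R \<Longrightarrow> (a,u)\<in>R \<Longrightarrow> (b,v)\<in>R \<Longrightarrow> (a+b, u * v) \<in> R"
  using pc_diff[of R a u "-b" "cnj v"] pc_neg[of R b v] by simp
lemma pc_nsmul: "pc R \<Longrightarrow> (a,u)\<in>R \<Longrightarrow> (nsmul n a, u^n) \<in> R"
  by (induct n) (simp_all add: nsmul_Suc pc_0 pc_add)

lemma unit_pow_aux:
  assumes "cmod (u::complex) = 1" "j + m + n' = n + m'"
  shows "u^n * cnj u^m = u^j * u^n' * cnj u^m'"
proof -
  have uc: "u * cnj u = 1" using unit_cnj[OF assms(1)] by (simp add: mult.commute)
  have e: "u^n * u^m' = u^j * u^m * u^n'"
    by (metis assms(2) power_add add.commute add.left_commute)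
  have "u^n * cnj u^m = u^n * cnj u^m * (u * cnj u)^m'" by (simp add: uc)
  also have "\<dots> = (u^n * u^m') * cnj u^m * cnj u^m'" by (simp add: power_mult_distrib mult_ac)
  also have "\<dots> = u^j * u^n' * cnj u^m' * (u * cnj u)^m" unfolding e by (simp add: power_mult_distrib mult_ac)
  also have "\<dots> = u^j * u^n' * cnj u^m'" by (simp add: uc)
  finally show ?thesis .
qed

lemma pc_ext:
  fixes R :: "('g::ab_group_add \<times> complex) set"
  assumes R: "pc R" and u: "cmod u = 1"
    and K: "\<And>j. nsmul j y \<in> Domain R \<Longrightarrow> (nsmul j y, u^j) \<in> R"
  defines "R' \<equiv> {(h + nsmul n y - nsmul m y, v * u^n * cnj u ^ m) | h v n m. (h,v)\<in>R}"
  shows "pc R'" "R \<subseteq> R'" "(y,u) \<in> R'"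
proof -
  show "R \<subseteq> R'"
  proof
    fix p assume "p \<in> R"
    then obtain h v where "p = (h,v)" "(h,v)\<in>R" by (cases p) auto
    moreover have "(h,v) = (h + nsmul 0 y - nsmul 0 y, v * u^0 * cnj u^0)" by simp
    ultimately show "p \<in> R'" unfolding R'_def by blast
  qed
  have "(y,u) = (0 + nsmul 1 y - nsmul 0 y, 1 * u^1 * cnj u^0)" by simp
  then show "(y,u) \<in> R'" unfolding R'_def using pc_0[OF R] by blast
  have sv: "v * u^n * cnj u ^ m = v' * u^n' * cnj u ^ m'"
    if hv: "(h,v)\<in>R" and hv': "(h',v')\<in>R" and eq: "h + nsmul n y - nsmul m y = h' + nsmul n' y - nsmul m' y"
      and le: "m + n' \<le> n + m'"
    for h v n m h' v' n' m'
  proof -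
    define j where "j = n + m' - (m + n')"
    have jj: "j + m + n' = n + m'" using le by (simp add: j_def)
    have "nsmul (j + m + n') y = nsmul (n + m') y" by (simp add: jj)
    hence "nsmul j y + nsmul m y + nsmul n' y = nsmul n y + nsmul m' y" by (simp add: nsmul_add)
    hence e2: "nsmul n y + nsmul m' y - (nsmul m y + nsmul n' y) = nsmul j y" by (simp add: algebra_simps)
    have "h' - h = nsmul n y + nsmul m' y - (nsmul m y + nsmul n' y)"
      using eq by (simp add: algebra_simps)
    hence hj: "h' - h = nsmul j y" using e2 by simp
    have "(h' - h, v' * cnj v) \<in> R" using pc_diff[OF R hv' hv] .
    hence "nsmul j y \<in> Domain R" using hj by force
    hence "(nsmul j y, u^j) \<in> R" by (rule K)
    hence "v' * cnj v = u^j" using pc_sv[OF R] \<open>(h' - h, v' * cnj v) \<in> R\<close> hj by metis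
    hence v': "v' = u^j * v" using unit_cnj[OF pc_unit[OF R hv]] by (metis mult.assoc mult.right_neutral)
    show ?thesis unfolding v' using unit_pow_aux[OF u jj] by (simp add: mult_ac)
  qed
  show "pc R'"
    unfolding pc_def
  proof (intro conjI allI impI)
    have "(0::'g,1::complex) = (0 + nsmul 0 y - nsmul 0 y, 1 * u^0 * cnj u^0)" by simp
    then show "(0,1) \<in> R'" unfolding R'_def using pc_0[OF R] by blast
  next
    fix a w b z assume "(a,w) \<in> R'" "(b,z) \<in> R'"
    then obtain h1 v1 n1 m1 h2 v2 n2 m2 where
      a: "a = h1 + nsmul n1 y - nsmul m1 y" "w = v1 * u^n1 * cnj u ^ m1" "(h1,v1)\<in>R" and
      b: "b = h2 + nsmul n2 y - nsmul m2 y" "z = v2 * u^n2 * cnj u ^ m2" "(h2,v2)\<in>R"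
      unfolding R'_def by blast
    have "a - b = (h1 - h2) + nsmul (n1+m2) y - nsmul (m1+n2) y"
      unfolding a b by (simp add: nsmul_add algebra_simps)
    moreover have "w * cnj z = (v1 * cnj v2) * u^(n1+m2) * cnj u^(m1+n2)"
      unfolding a b by (simp add: power_add mult_ac)
    ultimately show "(a - b, w * cnj z) \<in> R'" unfolding R'_def using pc_diff[OF R a(3) b(3)] by blast
  next
    fix a w z assume "(a,w) \<in> R'" "(a,z) \<in> R'"
    then obtain h1 v1 n1 m1 h2 v2 n2 m2 where
      a: "a = h1 + nsmul n1 y - nsmul m1 y" "w = v1 * u^n1 * cnj u ^ m1" "(h1,v1)\<in>R" and
      b: "a = h2 + nsmul n2 y - nsmul m2 y" "z = v2 * u^n2 * cnj u ^ m2" "(h2,v2)\<in>R"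
      unfolding R'_def by blast
    have eqa: "h1 + nsmul n1 y - nsmul m1 y = h2 + nsmul n2 y - nsmul m2 y" using a(1) b(1) by simp
    show "w = z"
    proof (cases "m1 + n2 \<le> n1 + m2")
      case True
      have "v1 * u^n1 * cnj u^m1 = v2 * u^n2 * cnj u^m2" by (rule sv[OF a(3) b(3) eqa True])
      then show ?thesis using a(2) b(2) by simp
    next
      case False
      hence le: "m2 + n1 \<le> n2 + m1" by arith
      have "v2 * u^n2 * cnj u^m2 = v1 * u^n1 * cnj u^m1" by (rule sv[OF b(3) a(3) eqa[symmetric] le])
      then show ?thesis using a(2) b(2) by simp
    qed
  next
    fix a w assume "(a,w) \<in> R'"
    then obtain h1 v1 n1 m1 where
      a: "w = v1 * u^n1 * cnj u ^ m1" "(h1,v1)\<in>R" unfolding R'_def by blast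
    show "cmod w = 1" unfolding a using pc_unit[OF R a(2)] u by (simp add: norm_mult norm_power)
  qed
qed


lemma pc_exists_u:
  fixes R :: "('g::ab_group_add \<times> complex) set"
  assumes R: "pc R"
  shows "\<exists>u. cmod u = 1 \<and> (\<forall>j. nsmul j y \<in> Domain R \<longrightarrow> (nsmul j y, u^j) \<in> R)"
proof (cases "\<exists>k>0. nsmul k y \<in> Domain R")
  case False
  have "(nsmul j y, 1^j) \<in> R" if j: "nsmul j y \<in> Domain R" for j
  proof (cases "j = 0")
    case True then show ?thesis using pc_0[OF R] by simp
  next
    case False2: False
    have "\<not> (0 < j \<and> nsmul j y \<in> Domain R)" using False by simp
    then show ?thesis using False2 j by simp
  qed
  then show ?thesis by (intro exI[of _ 1]) auto
next
  case True
  define k where "k = (LEAST k. 0 < k \<and> nsmul k y \<in> Domain R)"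
  have k: "0 < k" "nsmul k y \<in> Domain R" using LeastI_ex[OF True] unfolding k_def by auto
  then obtain c where c: "(nsmul k y, c) \<in> R" by auto
  have cu: "cmod c = 1" using pc_unit[OF R c] .
  define u where "u = cis (Arg c / k)"
  have c0: "c \<noteq> 0" using cu by auto
  have "u^k = cis (Arg c)" unfolding u_def Complex.DeMoivre using k(1) by simp
  also have "\<dots> = c" using c0 cu by (simp add: cis_Arg sgn_div_norm)
  finally have uk: "u^k = c" .
  show ?thesis
  proof (intro exI[of _ u] conjI allI impI)
    show "cmod u = 1" by (simp add: u_def)
  next
    fix j assume j: "nsmul j y \<in> Domain R"
    then obtain v where v: "(nsmul j y, v) \<in> R" by auto
    have e1: "nsmul (j div k * k + j mod k) y = nsmul (j div k) (nsmul k y) + nsmul (j mod k) y"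
      by (simp only: nsmul_add nsmul_mult)
    hence "nsmul j y = nsmul (j div k) (nsmul k y) + nsmul (j mod k) y" by simp
    hence eq: "nsmul (j mod k) y = nsmul j y - nsmul (j div k) (nsmul k y)" by (simp add: algebra_simps)
    have cq: "(nsmul (j div k) (nsmul k y), c^(j div k)) \<in> R" by (rule pc_nsmul[OF R c])
    have "nsmul (j mod k) y \<in> Domain R" unfolding eq using pc_diff[OF R v cq] by force
    moreover have lt: "j mod k < (LEAST k. 0 < k \<and> nsmul k y \<in> Domain R)"
      using k(1) unfolding k_def[symmetric] by simp
    have "\<not> (0 < j mod k \<and> nsmul (j mod k) y \<in> Domain R)" by (rule not_less_Least[OF lt])
    ultimately have "j mod k = 0" by simp
    hence jk: "j = j div k * k" using div_mult_mod_eq[of j k] by simp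
    have "u^j = c^(j div k)" by (subst jk) (simp add: power_mult uk mult.commute)
    moreover have "nsmul j y = nsmul (j div k) (nsmul k y)" by (subst jk) (simp add: nsmul_mult)
    ultimately show "(nsmul j y, u^j) \<in> R" using cq by simp
  qed
qed

lemma char_exists:
  fixes g :: "'g::ab_group_add"
  assumes w: "cmod w = 1" and hw: "\<And>j. nsmul j g = 0 \<Longrightarrow> w^j = 1"
  shows "\<exists>ch. is_char ch \<and> ch g = w"
proof -
  define R0 :: "('g \<times> complex) set" where "R0 = {(0,1)}"
  have R0: "pc R0" unfolding pc_def R0_def by simp
  define R1 where "R1 = {(h + nsmul n g - nsmul m g, v * w^n * cnj w ^ m) | h v n m. (h,v)\<in>R0}"
  have K: "nsmul j g \<in> Domain R0 \<Longrightarrow> (nsmul j g, w^j) \<in> R0" for j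
    using hw[of j] unfolding R0_def by auto
  have R1: "pc R1" "(g,w) \<in> R1" using pc_ext[OF R0 w K] unfolding R1_def by auto
  define A where "A = {R. pc R \<and> R1 \<subseteq> R}"
  have "\<exists>M\<in>A. \<forall>X\<in>A. M \<subseteq> X \<longrightarrow> X = M"
  proof (rule Zorn_Lemma2, intro ballI)
    fix C assume C: "C \<in> chains A"
    show "\<exists>U\<in>A. \<forall>X\<in>C. X \<subseteq> U"
    proof (cases "C = {}")
      case True then show ?thesis using R1 unfolding A_def by auto
    next
      case False
      have CA: "C \<subseteq> A" and ch: "\<And>X Y. X \<in> C \<Longrightarrow> Y \<in> C \<Longrightarrow> X \<subseteq> Y \<or> Y \<subseteq> X"
        using C unfolding chains_def chain_subset_def by auto
      have pcC: "\<And>X. X \<in> C \<Longrightarrow> pc X" using CA unfolding A_def by auto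
      have "pc (\<Union>C)" unfolding pc_def
      proof (intro conjI allI impI)
        show "(0,1) \<in> \<Union>C" using False pcC pc_0 by blast
      next
        fix a u b v assume "(a,u) \<in> \<Union>C" "(b,v) \<in> \<Union>C"
        then obtain X Y where "X\<in>C" "Y\<in>C" "(a,u)\<in>X" "(b,v)\<in>Y" by auto
        then show "(a - b, u * cnj v) \<in> \<Union>C" using ch[of X Y] pcC pc_diff by blast
      next
        fix a u v assume "(a,u) \<in> \<Union>C" "(a,v) \<in> \<Union>C"
        then obtain X Y where "X\<in>C" "Y\<in>C" "(a,u)\<in>X" "(a,v)\<in>Y" by auto
        then show "u = v" using ch[of X Y] pcC pc_sv by blast
      next
        fix a u assume "(a,u) \<in> \<Union>C"
        then show "cmod u = 1" using pcC pc_unit by blast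
      qed
      moreover have "R1 \<subseteq> \<Union>C" using False CA unfolding A_def by auto
      ultimately show ?thesis unfolding A_def by blast
    qed
  qed
  then obtain M where MA: "M \<in> A" and Mmax: "\<forall>X\<in>A. M \<subseteq> X \<longrightarrow> X = M" by blast
  have M: "pc M" "R1 \<subseteq> M" using MA unfolding A_def by auto
  have max: "X = M" if "pc X" "R1 \<subseteq> X" "M \<subseteq> X" for X
    using Mmax that unfolding A_def by blast
  have tot: "x \<in> Domain M" for x
  proof (rule ccontr)
    assume nx: "x \<notin> Domain M"
    obtain u where u: "cmod u = 1" "\<And>j. nsmul j x \<in> Domain M \<Longrightarrow> (nsmul j x, u^j) \<in> M"
      using pc_exists_u[OF M(1), of x] by blast
    define M' where "M' = {(h + nsmul n x - nsmul m x, v * u^n * cnj u ^ m) | h v n m. (h,v)\<in>M}"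
    have "pc M'" "M \<subseteq> M'" "(x,u) \<in> M'" using pc_ext[OF M(1) u] unfolding M'_def by auto
    hence "M' = M" using M(2) by (intro max) auto
    then show False using \<open>(x,u) \<in> M'\<close> nx by auto
  qed
  define ch where "ch x = (THE u. (x,u) \<in> M)" for x
  have chM: "(x, ch x) \<in> M" for x
  proof -
    obtain u where xu: "(x,u) \<in> M" using tot[of x] by auto
    show ?thesis unfolding ch_def by (rule theI[of _ u]) (use xu pc_sv[OF M(1)] in blast)+
  qed
  have "ch (x + y) = ch x * ch y" for x y
    using pc_sv[OF M(1) chM[of "x+y"] pc_add[OF M(1) chM[of x] chM[of y]]] .
  moreover have "cmod (ch x) = 1" for x using pc_unit[OF M(1) chM[of x]] .
  ultimately have ic: "is_char ch" unfolding is_char_def by simp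
  have "(g,w) \<in> M" using M(2) R1(2) by (rule subsetD)
  hence "ch g = w" using pc_sv[OF M(1) chM[of g]] by simp
  with ic show ?thesis by (intro exI[of _ ch] conjI)
qed


lemma vander:
  fixes Z :: "complex set"
  assumes "finite Z" "\<And>m. m < card Z \<Longrightarrow> (\<Sum>z\<in>Z. c z * z^m) = 0" "z \<in> Z"
  shows "c z = 0"
  using assms
proof (induction Z arbitrary: c z rule: finite_induct)
  case empty then show ?case by simp
next
  case (insert w Z)
  define c' where "c' z = c z * (z - w)" for z
  have S: "(\<Sum>z\<in>Z. c z * z^m) = - (c w * w^m)" if "m < card Z + 1" for m
    using insert.prems(1)[of m] insert.hyps that by (simp add: add_eq_0_iff)
  have "(\<Sum>z\<in>Z. c' z * z^m) = 0" if m: "m < card Z" for m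
  proof -
    have "(\<Sum>z\<in>Z. c' z * z^m) = (\<Sum>z\<in>Z. c z * z^(Suc m)) - w * (\<Sum>z\<in>Z. c z * z^m)"
      by (simp add: c'_def sum_distrib_left sum_subtractf algebra_simps)
    also have "\<dots> = 0" using S[of "Suc m"] S[of m] m by (simp add: algebra_simps)
    finally show ?thesis .
  qed
  hence c'0: "\<And>z. z \<in> Z \<Longrightarrow> c' z = 0" using insert.IH by blast
  have cZ: "\<And>z. z \<in> Z \<Longrightarrow> c z = 0"
  proof -
    fix z assume z: "z \<in> Z"
    then have "z \<noteq> w" using insert.hyps by auto
    then show "c z = 0" using c'0[OF z] by (simp add: c'_def)
  qed
  have "c w = 0" using S[of 0] cZ by simp
  then show ?case using cZ insert.prems(2) by auto
qed

definition restr :: "('g \<Rightarrow> bool) \<Rightarrow> ('g \<Rightarrow>\<^sub>0 complex) \<Rightarrow> ('g \<Rightarrow>\<^sub>0 complex)" where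
  "restr P a = (\<Sum>k\<in>{k\<in>keys a. P k}. single k (lookup a k))"

lemma lookup_restr: "lookup (restr P a) x = (if P x then lookup a x else 0)"
  unfolding restr_def lookup_sum
  by (cases "x \<in> keys a") (auto simp: lookup_single when_def in_keys_iff)

lemma keys_restr: "keys (restr P a) = {k\<in>keys a. P k}"
  by (auto simp: in_keys_iff lookup_restr split: if_splits)

lemma chat_restr: "chat ch (restr P a) = (\<Sum>k\<in>{k\<in>keys a. P k}. lookup a k * ch k)"
  unfolding restr_def chat_sum by simp

lemma is_char_one: "is_char (\<lambda>_. 1)" by (simp add: is_char_def)
lemma is_char_mult: "is_char ch \<Longrightarrow> is_char ps \<Longrightarrow> is_char (\<lambda>x. ch x * ps x ^ m)"
  by (simp add: is_char_def power_mult_distrib norm_mult norm_power)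

lemma char_sep_point:
  fixes d :: "'g::ab_group_add"
  assumes "d \<noteq> 0"
  shows "\<exists>ps. is_char ps \<and> ps d \<noteq> 1"
proof (cases "\<exists>k>0. nsmul k d = 0")
  case False
  have "(-1::complex)^j = 1" if "nsmul j d = 0" for j
  proof -
    have "\<not> (0 < j \<and> nsmul j d = 0)" using False by simp
    then show ?thesis using that by simp
  qed
  then obtain ps where "is_char ps" "ps d = -1" using char_exists[of "-1" d] by auto
  then show ?thesis by auto
next
  case True
  define k where "k = (LEAST k. 0 < k \<and> nsmul k d = 0)"
  have k: "0 < k" "nsmul k d = 0" using LeastI_ex[OF True] unfolding k_def by auto
  have k1: "k \<noteq> 1" using k assms by auto
  define w where "w = cis (2 * pi / k)"
  have "w^j = 1" if j: "nsmul j d = 0" for j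
  proof -
    have e1: "nsmul (j div k * k + j mod k) d = nsmul (j div k) (nsmul k d) + nsmul (j mod k) d"
      by (simp only: nsmul_add nsmul_mult)
    hence "nsmul (j mod k) d = 0" using j k(2) by simp
    moreover have lt: "j mod k < (LEAST k. 0 < k \<and> nsmul k d = 0)"
      using k(1) unfolding k_def[symmetric] by simp
    have "\<not> (0 < j mod k \<and> nsmul (j mod k) d = 0)" by (rule not_less_Least[OF lt])
    ultimately have "j mod k = 0" by simp
    hence jk: "j = j div k * k" using div_mult_mod_eq[of j k] by simp
    have "w^j = cis (real j * (2 * pi / k))" unfolding w_def Complex.DeMoivre ..
    also have "real j * (2 * pi / k) = 2 * pi * real (j div k)"
      using k(1) by (subst jk) (simp add: field_simps)
    also have "cis (2 * pi * real (j div k)) = 1" by (rule cis_multiple_2pi) simp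
    finally show ?thesis .
  qed
  then obtain ps where ps: "is_char ps" "ps d = w" using char_exists[of w d] by (auto simp: w_def)
  have "w \<noteq> 1"
  proof
    assume "w = 1"
    hence "cos (2 * pi / k) = 1" unfolding w_def by (metis Re_complex_of_real cis.sel(1) complex_Re_numeral  one_complex.sel(1))
    then obtain n :: int where n: "2 * pi / k = real_of_int n * 2 * pi"
      using cos_one_2pi_int[THEN iffD1] by blast
    hence "(2*pi) * (1 / real k) = (2*pi) * real_of_int n" by (simp add: mult_ac)
    hence "1 / real k = n" using pi_gt_zero by (simp only: mult_cancel_left) simp
    moreover have "0 < 1 / real k" "1 / real k < 1" using k(1) k1 by auto
    ultimately have "(0::real) < of_int n" "of_int n < (1::real)" by simp_all
    hence "0 < n" "n < 1" by simp_all
    then show False by simp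
  qed
  then show ?thesis using ps by auto
qed


lemma keys_empty_zero: "keys a = {} \<Longrightarrow> a = 0"
  by (rule poly_mapping_eqI) (auto simp: in_keys_iff)

lemma sep_full:
  fixes a :: "'g::ab_group_add \<Rightarrow>\<^sub>0 complex"
  assumes "\<And>ch. is_char ch \<Longrightarrow> chat ch a = 0"
  shows "a = 0"
  using assms
proof (induction "card (keys a)" arbitrary: a rule: less_induct)
  case less
  show ?case
  proof (rule ccontr)
    assume a0: "a \<noteq> 0"
    hence "keys a \<noteq> {}" using keys_empty_zero by blast
    then obtain g where g: "g \<in> keys a" by blast
    show False
    proof (cases "keys a = {g}")
      case True
      have "chat (\<lambda>_. 1) a = lookup a g" unfolding chat_def True by simp
      moreover have "lookup a g \<noteq> 0" using g by (simp add: in_keys_iff)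
      ultimately show False using less.prems[OF is_char_one] by simp
    next
      case False
      then obtain h where h: "h \<in> keys a" "h \<noteq> g" using g by blast
      obtain ps where ps: "is_char ps" "ps (g - h) \<noteq> 1" using char_sep_point[of "g - h"] h(2) by auto
      define P where "P k = (ps k = ps g)" for k
      define b where "b = restr P a"
      have "chat ch b = 0" if ch: "is_char ch" for ch
      proof -
        define Z where "Z = ps ` keys a"
        define c where "c z = (\<Sum>k\<in>{k\<in>keys a. ps k = z}. lookup a k * ch k)" for z
        have "(\<Sum>z\<in>Z. c z * z^m) = 0" for m
        proof -
          have "(\<Sum>z\<in>Z. c z * z^m) = (\<Sum>z\<in>Z. \<Sum>k\<in>{k\<in>keys a. ps k = z}. lookup a k * (ch k * ps k ^ m))"
            by (auto simp: c_def sum_distrib_right mult.assoc intro!: sum.cong)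
          also have "\<dots> = (\<Sum>k\<in>keys a. lookup a k * (ch k * ps k ^ m))"
            by (rule sum.group) (auto simp: Z_def)
          also have "\<dots> = chat (\<lambda>x. ch x * ps x ^ m) a" by (simp add: chat_def)
          also have "\<dots> = 0" by (rule less.prems[OF is_char_mult[OF ch ps(1)]])
          finally show ?thesis .
        qed
        hence "c (ps g) = 0" using vander[of Z c "ps g"] by (auto simp: Z_def g)
        moreover have "chat ch b = c (ps g)" by (simp add: b_def chat_restr c_def P_def eq_commute)
        ultimately show ?thesis by simp
      qed
      moreover have "card (keys b) < card (keys a)"
      proof (rule psubset_card_mono)
        show "finite (keys a)" by simp
        have "\<not> P h"
        proof
          assume "P h"
          hence "ps g = ps h" by (simp add: P_def)
          hence "ps (g-h) = ps h * cnj (ps h)" using char_diff[OF ps(1)] by simp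
          also have "\<dots> = 1" using unit_cnj[OF char_norm[OF ps(1)]] by (simp add: mult.commute)
          finally show False using ps(2) by simp
        qed
        then show "keys b \<subset> keys a" using h(1) by (auto simp: b_def keys_restr)
      qed
      ultimately have "b = 0" using less.hyps by blast
      moreover have "lookup b g \<noteq> 0" using g by (simp add: b_def lookup_restr P_def in_keys_iff)
      ultimately show False by simp
    qed
  qed
qed


definition NS :: "('g::ab_group_add \<Rightarrow> complex) set \<Rightarrow> ('g \<Rightarrow>\<^sub>0 complex) \<Rightarrow> real" where
  "NS S a = Sup ((\<lambda>ch. cmod (chat ch a)) ` S)"

definition l1 :: "('g \<Rightarrow>\<^sub>0 complex) \<Rightarrow> real" where
  "l1 a = (\<Sum>g\<in>keys a. cmod (lookup a g))"

lemma chat_le_l1: "is_char ch \<Longrightarrow> cmod (chat ch a) \<le> l1 a"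
  unfolding chat_def l1_def
  by (rule order.trans[OF norm_sum]) (simp add: norm_mult char_norm)

locale charset =
  fixes S :: "('g::ab_group_add \<Rightarrow> complex) set"
  assumes ne: "S \<noteq> {}" and chars: "\<And>ch. ch \<in> S \<Longrightarrow> is_char ch"
begin

lemma bdd: "bdd_above ((\<lambda>ch. cmod (chat ch a)) ` S)"
  by (rule bdd_aboveI[of _ "l1 a"]) (auto intro: chat_le_l1 chars)

lemma NS_ge: "ch \<in> S \<Longrightarrow> cmod (chat ch a) \<le> NS S a"
  unfolding NS_def by (rule cSup_upper) (auto intro: bdd)

lemma NS_le: "(\<And>ch. ch \<in> S \<Longrightarrow> cmod (chat ch a) \<le> B) \<Longrightarrow> NS S a \<le> B"
  unfolding NS_def by (rule cSup_least) (use ne in auto)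

lemma NS_nonneg: "0 \<le> NS S a"
proof -
  obtain ch where "ch \<in> S" using ne by blast
  then show ?thesis using NS_ge[of ch a] norm_ge_zero[of "chat ch a"] by linarith
qed

lemma NS_cstar:
  assumes sep: "\<And>a. (\<And>ch. ch \<in> S \<Longrightarrow> chat ch a = 0) \<Longrightarrow> a = 0"
  shows "cstar_norm (NS S)"
  unfolding cstar_norm_def
proof (intro conjI allI)
  fix a show "0 \<le> NS S a" by (rule NS_nonneg)
next
  fix a show "NS S a = 0 \<longleftrightarrow> a = 0"
  proof
    assume "NS S a = 0"
    hence "\<And>ch. ch \<in> S \<Longrightarrow> chat ch a = 0" using NS_ge[of _ a] by (metis norm_le_zero_iff)
    then show "a = 0" by (rule sep)
  next
    assume "a = 0"
    hence "NS S a \<le> 0" by (intro NS_le) simp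
    then show "NS S a = 0" using NS_nonneg[of a] by linarith
  qed
next
  fix a b show "NS S (a + b) \<le> NS S a + NS S b"
  proof (rule NS_le)
    fix ch assume ch: "ch \<in> S"
    have "cmod (chat ch (a+b)) \<le> cmod (chat ch a) + cmod (chat ch b)"
      unfolding chat_add by (rule norm_triangle_ineq)
    also have "\<dots> \<le> NS S a + NS S b" using NS_ge[OF ch, of a] NS_ge[OF ch, of b] by linarith
    finally show "cmod (chat ch (a+b)) \<le> NS S a + NS S b" .
  qed
next
  fix c a show "NS S (gscale c a) = cmod c * NS S a"
  proof (rule antisym)
    show "NS S (gscale c a) \<le> cmod c * NS S a"
    proof (rule NS_le)
      fix ch assume ch: "ch \<in> S"
      show "cmod (chat ch (gscale c a)) \<le> cmod c * NS S a"
        unfolding chat_gscale norm_mult by (rule mult_left_mono[OF NS_ge[OF ch]]) simp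
    qed
  next
    show "cmod c * NS S a \<le> NS S (gscale c a)"
    proof (cases "c = 0")
      case True then show ?thesis using NS_nonneg by simp
    next
      case False
      hence c0: "0 < cmod c" by simp
      have "NS S a \<le> NS S (gscale c a) / cmod c"
      proof (rule NS_le)
        fix ch assume ch: "ch \<in> S"
        have "cmod c * cmod (chat ch a) \<le> NS S (gscale c a)"
          using NS_ge[OF ch, of "gscale c a"] unfolding chat_gscale norm_mult .
        then show "cmod (chat ch a) \<le> NS S (gscale c a) / cmod c"
          using c0 by (simp add: field_simps mult.commute)
      qed
      then show ?thesis using c0 by (simp add: field_simps mult.commute)
    qed
  qed
next
  fix a b show "NS S (a * b) \<le> NS S a * NS S b"
  proof (rule NS_le)
    fix ch assume ch: "ch \<in> S"
    show "cmod (chat ch (a*b)) \<le> NS S a * NS S b"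
      unfolding chat_mult[OF chars[OF ch]] norm_mult
      by (rule mult_mono[OF NS_ge[OF ch] NS_ge[OF ch]]) (simp_all add: NS_nonneg)
  qed
next
  fix a
  have key: "cmod (chat ch (gstar a * a)) = (cmod (chat ch a))\<^sup>2" if "ch \<in> S" for ch
    using chars[OF that] by (simp add: chat_mult chat_gstar norm_mult power2_eq_square)
  show "NS S (gstar a * a) = (NS S a)\<^sup>2"
  proof (rule antisym)
    show "NS S (gstar a * a) \<le> (NS S a)\<^sup>2"
      by (rule NS_le) (simp add: key power_mono NS_ge)
  next
    have "NS S a \<le> sqrt (NS S (gstar a * a))"
    proof (rule NS_le)
      fix ch assume ch: "ch \<in> S"
      show "cmod (chat ch a) \<le> sqrt (NS S (gstar a * a))"
        using NS_ge[OF ch, of "gstar a * a"] key[OF ch] by (intro real_le_rsqrt) simp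
    qed
    hence "(NS S a)\<^sup>2 \<le> (sqrt (NS S (gstar a * a)))\<^sup>2"
      using NS_nonneg by (intro power_mono) auto
    then show "(NS S a)\<^sup>2 \<le> NS S (gstar a * a)" using NS_nonneg by simp
  qed
qed

end


lemma pow_bound:
  fixes x rho K :: real
  assumes x: "0 \<le> x" and r: "0 \<le> rho" and b: "\<And>k. x^(2^k) \<le> K * rho^(2^k)"
  shows "x \<le> rho"
proof (rule ccontr)
  assume "\<not> x \<le> rho"
  hence xr: "rho < x" by simp
  show False
  proof (cases "rho = 0")
    case True
    have "x^(2^0) \<le> 0" using b[of 0] True by simp
    then show False using xr True by simp
  next
    case False
    hence r0: "0 < rho" using r by simp
    define t where "t = x / rho"
    have t1: "1 < t" using xr r0 by (simp add: t_def field_simps)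
    obtain k where k: "K < t^k" using real_arch_pow[OF t1] by blast
    have "t^k \<le> t^(2^k)" using less_exp[of k] t1 by (intro power_increasing) auto
    hence "K * rho^(2^k) < t^(2^k) * rho^(2^k)" using k r0 by (intro mult_strict_right_mono) auto
    also have "\<dots> = x^(2^k)" using r0 by (simp add: t_def power_divide)
    finally show False using b[of k] by simp
  qed
qed

lemma cn_nonneg: "cstar_norm N \<Longrightarrow> 0 \<le> N a" by (simp add: cstar_norm_def)
lemma cn_zero_iff: "cstar_norm N \<Longrightarrow> N a = 0 \<longleftrightarrow> a = 0" by (simp add: cstar_norm_def)
lemma cn_tri: "cstar_norm N \<Longrightarrow> N (a + b) \<le> N a + N b" by (simp add: cstar_norm_def)
lemma cn_scale: "cstar_norm N \<Longrightarrow> N (gscale c a) = cmod c * N a" by (simp add: cstar_norm_def)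
lemma cn_mult: "cstar_norm N \<Longrightarrow> N (a * b) \<le> N a * N b" by (simp add: cstar_norm_def)
lemma cn_cstar: "cstar_norm N \<Longrightarrow> N (gstar a * a) = (N a)\<^sup>2" by (simp add: cstar_norm_def)
lemma cn_0: "cstar_norm N \<Longrightarrow> N 0 = 0" by (simp add: cstar_norm_def)
lemma cn_sum: "cstar_norm N \<Longrightarrow> N (sum f A) \<le> (\<Sum>x\<in>A. N (f x))"
proof (induct A rule: infinite_finite_induct)
  case (insert x F)
  then show ?case using cn_tri[OF insert.prems, of "f x" "sum f F"] by simp
qed (simp_all add: cn_0)

lemma pm_eq_chat: "(\<And>ch. is_char ch \<Longrightarrow> chat ch a = chat ch b) \<Longrightarrow> a = b"
  using sep_full[of "a - b"] by (simp add: chat_diff)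

lemma chat_const: "is_char ch \<Longrightarrow> chat ch (single 0 c) = c"
  by (simp add: char_zero)

definition torsion :: "'g::ab_group_add itself \<Rightarrow> bool" where
  "torsion _ \<longleftrightarrow> (\<forall>x::'g. \<exists>n>0. nsmul n x = 0)"

lemma Lam_finite:
  fixes a :: "'g::ab_group_add \<Rightarrow>\<^sub>0 complex"
  assumes tor: "\<And>x::'g. \<exists>n>0. nsmul n x = 0"
  shows "finite {chat ch a | ch. is_char ch}"
proof -
  define od where "od x = (SOME n. n > 0 \<and> nsmul n x = 0)" for x :: 'g
  have od: "od x > 0" "nsmul (od x) x = 0" for x using someI_ex[OF tor[of x]] unfolding od_def by auto
  define F where "F phi = (\<Sum>g\<in>keys a. lookup a g * phi g)" for phi :: "'g \<Rightarrow> complex"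
  have "{chat ch a | ch. is_char ch} \<subseteq> F ` (PiE (keys a) (\<lambda>g. {z. z^(od g) = 1}))"
  proof
    fix z assume "z \<in> {chat ch a | ch. is_char ch}"
    then obtain ch where ch: "is_char ch" "z = chat ch a" by blast
    have "restrict ch (keys a) \<in> PiE (keys a) (\<lambda>g. {z. z^(od g) = 1})"
      using char_nsmul[OF ch(1), of "od _" ] od(2) char_zero[OF ch(1)] by (auto simp: PiE_def Pi_def) (metis)
    moreover have "z = F (restrict ch (keys a))" unfolding F_def ch(2) chat_def by simp
    ultimately show "z \<in> F ` (PiE (keys a) (\<lambda>g. {z. z^(od g) = 1}))" by blast
  qed
  moreover have "finite (PiE (keys a) (\<lambda>g. {z::complex. z^(od g) = 1}))"
    using od(1) by (intro finite_PiE) (auto intro: finite_roots_unity)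
  ultimately show ?thesis by (rule finite_subset[OF _ finite_imageI])
qed


abbreviation SF :: "('g::ab_group_add \<Rightarrow> complex) set" where "SF \<equiv> {ch. is_char ch}"

lemma charset_SF: "charset (SF :: ('g::ab_group_add \<Rightarrow> complex) set)"
  by unfold_locales (auto intro: is_char_one)

lemma NS_SF_cstar: "cstar_norm (NS (SF :: ('g::ab_group_add \<Rightarrow> complex) set))"
  by (rule charset.NS_cstar[OF charset_SF]) (rule sep_full, simp)

lemma lower_bound:
  fixes a :: "'g::ab_group_add \<Rightarrow>\<^sub>0 complex"
  assumes tor: "\<And>x::'g. \<exists>n>0. nsmul n x = 0" and N: "cstar_norm N" and ch0: "is_char ch0"
  shows "cmod (chat ch0 a) \<le> N a"
proof -
  define L where "L = {chat ch a | ch. is_char ch}"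
  have fL: "finite L" unfolding L_def by (rule Lam_finite[OF tor])
  define l0 where "l0 = chat ch0 a"
  define e where "e = (\<Prod>mu\<in>L - {l0}. a - single 0 mu)"
  have ce: "chat ch e = (\<Prod>mu\<in>L - {l0}. chat ch a - mu)" if "is_char ch" for ch
    unfolding e_def using that by (simp add: chat_prod chat_diff char_zero)
  have ae: "a * e = gscale l0 e"
  proof (rule pm_eq_chat)
    fix ch :: "'g \<Rightarrow> complex" assume ch: "is_char ch"
    show "chat ch (a * e) = chat ch (gscale l0 e)"
    proof (cases "chat ch a = l0")
      case True then show ?thesis by (simp add: chat_mult[OF ch] chat_gscale)
    next
      case False
      have "chat ch a \<in> L - {l0}" using ch False unfolding L_def by auto
      hence "chat ch e = 0" unfolding ce[OF ch] using fL by (auto simp: prod_zero_iff)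
      then show ?thesis by (simp add: chat_mult[OF ch] chat_gscale)
    qed
  qed
  have "chat ch0 e \<noteq> 0" unfolding ce[OF ch0] using fL by (auto simp: prod_zero_iff l0_def)
  hence "e \<noteq> 0" by auto
  hence Ne: "0 < N e" using cn_nonneg[OF N, of e] cn_zero_iff[OF N, of e] by linarith
  have "cmod l0 * N e = N (a * e)" using cn_scale[OF N] ae by simp
  also have "\<dots> \<le> N a * N e" by (rule cn_mult[OF N])
  finally show ?thesis using Ne unfolding l0_def by simp
qed


lemma upper_bound:
  fixes a :: "'g::ab_group_add \<Rightarrow>\<^sub>0 complex"
  assumes tor: "\<And>x::'g. \<exists>n>0. nsmul n x = 0" and N: "cstar_norm N"
  shows "N a \<le> NS SF a"
proof -
  define b where "b = gstar a * a"
  have cb: "chat ch b = of_real ((cmod (chat ch a))^2)" if "is_char ch" for ch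
    using that complex_norm_square[of "chat ch a"]
    by (simp add: b_def chat_mult chat_gstar mult.commute)
  have sa: "gstar (b^m) = b^m" for m
  proof (rule pm_eq_chat)
    fix ch :: "'g \<Rightarrow> complex" assume ch: "is_char ch"
    show "chat ch (gstar (b^m)) = chat ch (b^m)"
      using ch by (simp add: chat_gstar chat_power cb)
  qed
  have pw: "N (b^(2^k)) = N b ^ (2^k)" for k
  proof (induct k)
    case (Suc k)
    have "b^(2^Suc k) = gstar (b^(2^k)) * b^(2^k)" by (simp add: sa power_add[symmetric] mult_2)
    hence "N (b^(2^Suc k)) = (N (b^(2^k)))\<^sup>2" using cn_cstar[OF N] by simp
    also have "\<dots> = N b ^ (2^Suc k)" using Suc by (simp add: power_mult[symmetric] mult.commute)
    finally show ?case .
  qed simp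
  define L where "L = {chat ch b | ch. is_char ch}"
  have fL: "finite L" unfolding L_def by (rule Lam_finite[OF tor])
  define rho where "rho = NS SF b"
  define E where "E l = (\<Prod>mu\<in>L - {l}. gscale (1/(l-mu)) (b - single 0 mu))" for l
  have chE: "chat ch (E l) = (\<Prod>mu\<in>L - {l}. (1/(l-mu)) * (chat ch b - mu))" if "is_char ch" for ch l
    unfolding E_def using that by (simp add: chat_prod chat_diff char_zero chat_gscale)
  have expand: "b^n = (\<Sum>l\<in>L. gscale (l^n) (E l))" for n
  proof (rule pm_eq_chat)
    fix ch :: "'g \<Rightarrow> complex" assume ch: "is_char ch"
    define be where "be = chat ch b"
    have beL: "be \<in> L" unfolding L_def be_def using ch by blast
    have "chat ch (\<Sum>l\<in>L. gscale (l^n) (E l)) = (\<Sum>l\<in>L. l^n * chat ch (E l))"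
      by (simp add: chat_sum chat_gscale)
    also have "\<dots> = be^n * chat ch (E be) + (\<Sum>l\<in>L - {be}. l^n * chat ch (E l))"
      using fL beL by (simp add: sum.remove)
    also have "(\<Sum>l\<in>L - {be}. l^n * chat ch (E l)) = 0"
    proof (rule sum.neutral, intro ballI)
      fix l assume l: "l \<in> L - {be}"
      hence "be \<in> L - {l}" using beL by auto
      hence "chat ch (E l) = 0" unfolding chE[OF ch] be_def[symmetric] using fL
        by (auto simp: prod_zero_iff intro!: bexI[of _ be])
      then show "l^n * chat ch (E l) = 0" by simp
    qed
    also have "chat ch (E be) = 1" unfolding chE[OF ch] be_def[symmetric]
      by (rule prod.neutral) auto
    finally show "chat ch (b^n) = chat ch (\<Sum>l\<in>L. gscale (l^n) (E l))"
      by (simp add: chat_power[OF ch] be_def)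
  qed
  have lrho: "cmod l \<le> rho" if "l \<in> L" for l
    using that charset.NS_ge[OF charset_SF] unfolding L_def rho_def by auto
  have rho0: "0 \<le> rho" unfolding rho_def by (rule charset.NS_nonneg[OF charset_SF])
  define K where "K = (\<Sum>l\<in>L. N (E l))"
  have bound: "N (b^n) \<le> K * rho^n" for n
  proof -
    have "N (b^n) \<le> (\<Sum>l\<in>L. N (gscale (l^n) (E l)))" unfolding expand[of n] by (rule cn_sum[OF N])
    also have "\<dots> = (\<Sum>l\<in>L. cmod l ^ n * N (E l))" by (simp add: cn_scale[OF N] norm_power)
    also have "\<dots> \<le> (\<Sum>l\<in>L. rho ^ n * N (E l))"
      by (intro sum_mono mult_right_mono power_mono lrho) (auto simp: cn_nonneg[OF N])
    also have "\<dots> = K * rho^n" by (simp add: K_def sum_distrib_left sum_distrib_right mult.commute)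
    finally show ?thesis .
  qed
  have "N b ^ (2^k) \<le> K * rho^(2^k)" for k using bound[of "2^k"] pw[of k] by simp
  hence "N b \<le> rho" by (rule pow_bound[OF cn_nonneg[OF N] rho0])
  moreover have "N b = (N a)\<^sup>2" unfolding b_def by (rule cn_cstar[OF N])
  moreover have "rho = (NS SF a)\<^sup>2" unfolding rho_def b_def by (rule cn_cstar[OF NS_SF_cstar])
  ultimately have "(N a)\<^sup>2 \<le> (NS SF a)\<^sup>2" by simp
  then show ?thesis using charset.NS_nonneg[OF charset_SF] by (rule power2_le_imp_le)
qed


lemma unit_cis_Arg: "cmod z = 1 \<Longrightarrow> cis (Arg z) = z"
proof -
  assume z: "cmod z = 1"
  hence "z \<noteq> 0" by auto
  then show ?thesis using z by (simp add: cis_Arg sgn_div_norm)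
qed

lemma angle_aux:
  fixes be al :: real and n :: nat
  assumes n: "0 < n" and al: "al = pi / (2 * n)" and be: "- pi < be" "be \<le> pi"
  defines "m0 \<equiv> nat \<lceil>(7 * pi / 2 - be) / al\<rceil>"
  shows "m < n \<Longrightarrow> 0 \<le> cos (be + real (m0 + m) * al)"
proof -
  assume m: "m < n"
  have al0: "0 < al" using n al by simp
  define r where "r = (7 * pi / 2 - be) / al"
  have r0: "0 < r" using be al0 pi_gt_zero unfolding r_def by (intro divide_pos_pos) linarith+
  have m0r: "real m0 = of_int \<lceil>r\<rceil>" unfolding m0_def r_def[symmetric] using r0 by simp
  have c1: "r \<le> real m0" "real m0 < r + 1" using ceiling_correct[of r] m0r by auto
  have "r * al = 7 * pi / 2 - be" unfolding r_def using al0 by simp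
  moreover have a1: "r * al \<le> real m0 * al" using c1(1) al0 by (intro mult_right_mono) auto
  moreover have a2: "real m0 * al < r * al + al"
    using mult_strict_right_mono[OF c1(2) al0] by (simp add: algebra_simps)
  ultimately have lo: "7 * pi / 2 \<le> be + real m0 * al" and hi: "be + real m0 * al < 7 * pi / 2 + al"
    by linarith+
  have nal: "real n * al = pi / 2" using n al by simp
  have "real (Suc m) * al \<le> real n * al" using m al0 by (intro mult_right_mono) auto
  hence mal: "real m * al + al \<le> pi / 2" using nal by (simp add: algebra_simps)
  define t where "t = be + real (m0 + m) * al - 4 * pi"
  have t1: "- (pi / 2) \<le> t" using lo al0 unfolding t_def by (simp add: algebra_simps)
    (smt (verit) m mult_nonneg_nonneg of_nat_0_le_iff)
  have t2: "t \<le> pi / 2" using hi mal pi_gt_zero unfolding t_def of_nat_add distrib_right by linarith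
  have "0 \<le> cos t" by (rule cos_ge_zero[OF t1 t2])
  moreover have "cos (be + real (m0 + m) * al) = cos (t + 2 * pi + 2 * pi)" unfolding t_def by simp
  moreover have "cos (t + 2 * pi + 2 * pi) = cos t" by (simp only: cos_periodic)
  ultimately show ?thesis by simp
qed


lemma sep_half:
  fixes x :: "'g::ab_group_add" and a :: "'g \<Rightarrow>\<^sub>0 complex"
  assumes inf: "\<And>n. 0 < n \<Longrightarrow> nsmul n x \<noteq> 0"
    and h: "\<And>ch. is_char ch \<Longrightarrow> 0 \<le> Re (ch x) \<Longrightarrow> chat ch a = 0"
  shows "a = 0"
proof (cases "a = 0")
  case True thus ?thesis .
next
  case False
  define n where "n = card (keys a)"
  have "keys a \<noteq> {}" using False keys_empty_zero by blast
  hence n0: "0 < n" unfolding n_def by (simp add: card_gt_0_iff)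
  define al where "al = pi / (2 * n)"
  have "cis al ^ j = 1" if "nsmul j x = 0" for j
  proof -
    have "j = 0" using inf[of j] that by (cases "j = 0") auto
    then show ?thesis by simp
  qed
  then obtain ps where ps: "is_char ps" "ps x = cis al" using char_exists[of "cis al" x] by auto
  have "chat ch a = 0" if ch: "is_char ch" for ch
  proof -
    define be where "be = Arg (ch x)"
    have chx: "ch x = cis be" unfolding be_def by (rule unit_cis_Arg[OF char_norm[OF ch], symmetric])
    have beb: "- pi < be" "be \<le> pi" using Arg_bounded unfolding be_def by auto
    define m0 where "m0 = nat \<lceil>(7 * pi / 2 - be) / al\<rceil>"
    define Z where "Z = ps ` keys a"
    define c where "c z = (\<Sum>k\<in>{k\<in>keys a. ps k = z}. lookup a k * ch k)" for z
    have cZ: "card Z \<le> n" unfolding Z_def n_def by (rule card_image_le) simp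
    have cz: "(\<Sum>z\<in>Z. (c z * z^m0) * z^m) = 0" if m: "m < card Z" for m
    proof -
      have mn: "m < n" using m cZ by simp
      have "(\<Sum>z\<in>Z. (c z * z^m0) * z^m) = (\<Sum>z\<in>Z. \<Sum>k\<in>{k\<in>keys a. ps k = z}. lookup a k * ch k * z ^ (m0+m))"
        by (simp only: c_def sum_distrib_right mult.assoc power_add)
      also have "\<dots> = (\<Sum>z\<in>Z. \<Sum>k\<in>{k\<in>keys a. ps k = z}. lookup a k * (ch k * ps k ^ (m0+m)))"
        by (intro sum.cong refl) (auto simp: mult.assoc)
      also have "\<dots> = (\<Sum>k\<in>keys a. lookup a k * (ch k * ps k ^ (m0+m)))"
        by (rule sum.group) (auto simp: Z_def)
      also have "\<dots> = chat (\<lambda>y. ch y * ps y ^ (m0+m)) a" by (simp add: chat_def)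
      also have "\<dots> = 0"
      proof (rule h[OF is_char_mult[OF ch ps(1)]])
        have "ch x * ps x ^ (m0+m) = cis (be + real (m0 + m) * al)"
          unfolding chx ps(2) Complex.DeMoivre cis_mult by (simp add: mult.commute)
        moreover have "0 \<le> cos (be + real (m0 + m) * al)"
          unfolding m0_def by (rule angle_aux[OF n0 al_def beb mn])
        ultimately show "0 \<le> Re (ch x * ps x ^ (m0 + m))" by simp
      qed
      finally show ?thesis .
    qed
    have c0: "c z = 0" if z: "z \<in> Z" for z
    proof -
      have "c z * z^m0 = 0" by (rule vander[of Z "\<lambda>z. c z * z^m0" z]) (use cz z in \<open>auto simp: Z_def\<close>)
      moreover have "z \<noteq> 0" using z char_nz[OF ps(1)] unfolding Z_def by auto
      ultimately show ?thesis by simp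
    qed
    have "chat ch a = (\<Sum>z\<in>Z. c z)" unfolding chat_def c_def
      by (rule sum.group[symmetric]) (auto simp: Z_def)
    also have "\<dots> = 0" using c0 by simp
    finally show ?thesis .
  qed
  then show ?thesis by (rule sep_full)
qed


lemma not_unique:
  fixes x :: "'g::ab_group_add"
  assumes inf: "\<And>n. 0 < n \<Longrightarrow> nsmul n x \<noteq> 0"
  shows "\<not> (\<exists>!N :: ('g \<Rightarrow>\<^sub>0 complex) \<Rightarrow> real. cstar_norm N)"
proof
  assume uq: "\<exists>!N :: ('g \<Rightarrow>\<^sub>0 complex) \<Rightarrow> real. cstar_norm N"
  define SH :: "('g \<Rightarrow> complex) set" where "SH = {ch. is_char ch \<and> 0 \<le> Re (ch x)}"
  have cs: "charset SH" unfolding SH_def by unfold_locales (auto intro!: exI[of _ "\<lambda>_. 1"] is_char_one)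
  have N1: "cstar_norm (NS SH)"
  proof (rule charset.NS_cstar[OF cs])
    fix a :: "'g \<Rightarrow>\<^sub>0 complex" assume "\<And>ch. ch \<in> SH \<Longrightarrow> chat ch a = 0"
    then show "a = 0" by (intro sep_half[OF inf]) (auto simp: SH_def)
  qed
  have N2: "cstar_norm (NS (SF :: ('g \<Rightarrow> complex) set))" by (rule NS_SF_cstar)
  have eq: "NS SH = NS (SF :: ('g \<Rightarrow> complex) set)" using uq N1 N2 by blast
  define d :: "'g \<Rightarrow>\<^sub>0 complex" where "d = single 0 1 - single x 1"
  have cd: "chat ch d = 1 - ch x" if "is_char ch" for ch
    using that by (simp add: d_def chat_diff char_zero chat_one)
  have "(-1::complex) ^ j = 1" if "nsmul j x = 0" for j
  proof -
    have "j = 0" using inf[of j] that by (cases "j = 0") auto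
    then show ?thesis by simp
  qed
  then obtain m where m: "is_char m" "m x = -1" using char_exists[of "-1" x] by auto
  have "cmod (chat m d) \<le> NS SF d" by (rule charset.NS_ge[OF charset_SF]) (simp add: m)
  hence ge: "2 \<le> NS SF d" using cd[OF m(1)] m(2) by simp
  have le: "NS SH d \<le> sqrt 2"
  proof (rule charset.NS_le[OF cs])
    fix ch assume ch: "ch \<in> SH"
    hence c: "is_char ch" "0 \<le> Re (ch x)" unfolding SH_def by auto
    have u: "cmod (ch x) = 1" by (rule char_norm[OF c(1)])
    have "(cmod (1 - ch x))\<^sup>2 = 2 - 2 * Re (ch x)"
      using cmod_power2[of "ch x"] cmod_power2[of "1 - ch x"] u by (simp add: power2_eq_square algebra_simps)
    hence "(cmod (1 - ch x))\<^sup>2 \<le> 2" using c(2) by simp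
    then show "cmod (chat ch d) \<le> sqrt 2" unfolding cd[OF c(1)] by (rule real_le_rsqrt)
  qed
  have "sqrt 2 < (2::real)" by (rule real_less_lsqrt) auto
  then show False using ge le eq by simp
qed

lemma gen_sub_mem:
  assumes "x \<in> gen_subgroup S"
    and "S \<subseteq> H" "0 \<in> H" "\<forall>a\<in>H. \<forall>b\<in>H. a - b \<in> H"
  shows "x \<in> H"
  using assms unfolding gen_subgroup_def by blast

lemma gen_sub_closed:
  fixes S :: "'g::ab_group_add set"
  shows "S \<subseteq> gen_subgroup S" "0 \<in> gen_subgroup S"
    "a \<in> gen_subgroup S \<Longrightarrow> b \<in> gen_subgroup S \<Longrightarrow> a - b \<in> gen_subgroup S"
  unfolding gen_subgroup_def by auto

lemma gen_sub_add:
  fixes S :: "'g::ab_group_add set"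
  assumes "a \<in> gen_subgroup S" "b \<in> gen_subgroup S"
  shows "a + b \<in> gen_subgroup S"
proof -
  have "0 - b \<in> gen_subgroup S" using gen_sub_closed(2,3) assms(2) by blast
  hence "a - (0 - b) \<in> gen_subgroup S" using gen_sub_closed(3) assms(1) by blast
  then show ?thesis by simp
qed

lemma lf_torsion:
  fixes x :: "'g::ab_group_add"
  assumes fin: "finite (gen_subgroup {x})"
  shows "\<exists>n>0. nsmul n x = 0"
proof -
  have mem: "nsmul n x \<in> gen_subgroup {x}" for n
  proof (induct n)
    case 0 then show ?case using gen_sub_closed(2) by simp
  next
    case (Suc n)
    have "x \<in> gen_subgroup {x}" using gen_sub_closed(1) by blast
    then show ?case using gen_sub_add[OF _ Suc] by (simp add: nsmul_Suc)
  qed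
  have "\<not> inj (\<lambda>n. nsmul n x)"
  proof
    assume "inj (\<lambda>n. nsmul n x)"
    hence "infinite (range (\<lambda>n. nsmul n x))" by (rule range_inj_infinite)
    moreover have "range (\<lambda>n. nsmul n x) \<subseteq> gen_subgroup {x}" using mem by auto
    ultimately show False using fin finite_subset by blast
  qed
  then obtain i j where ij: "i \<noteq> j" "nsmul i x = nsmul j x" unfolding inj_def by blast
  show ?thesis
  proof (cases "i < j")
    case True
    have "nsmul j x = nsmul (j - i) x + nsmul i x" using True by (simp add: nsmul_add[symmetric])
    then show ?thesis using ij True by (intro exI[of _ "j - i"]) simp
  next
    case False
    hence "j < i" using ij(1) by simp
    hence "nsmul i x = nsmul (i - j) x + nsmul j x" by (simp add: nsmul_add[symmetric])
    then show ?thesis using ij \<open>j < i\<close> by (intro exI[of _ "i - j"]) simp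
  qed
qed

lemma torsion_lf:
  fixes S :: "'g::ab_group_add set"
  assumes tor: "\<And>x::'g. \<exists>n>0. nsmul n x = 0" and S: "finite S"
  shows "finite (gen_subgroup S)"
proof -
  define od where "od x = (SOME n. n > 0 \<and> nsmul n x = 0)" for x :: 'g
  have od: "od x > 0" "nsmul (od x) x = 0" for x using someI_ex[OF tor[of x]] unfolding od_def by auto
  have md: "nsmul n s = nsmul (n mod od s) s" for n s
  proof -
    have "nsmul (n div od s * od s + n mod od s) s = nsmul (n div od s) (nsmul (od s) s) + nsmul (n mod od s) s"
      by (simp only: nsmul_add nsmul_mult)
    then show ?thesis using od(2) by simp
  qed
  have ng: "- nsmul n s = nsmul (n * (od s - 1)) s" for n s
  proof -
    have "nsmul (n * (od s - 1) + n) s = nsmul (n * od s) s" using od(1)[of s]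
      by (simp add: algebra_simps)
    also have "\<dots> = 0" by (simp add: nsmul_mult od(2))
    finally have "nsmul (n * (od s - 1)) s + nsmul n s = 0" by (simp add: nsmul_add)
    then show ?thesis by (simp add: add_eq_0_iff)
  qed
  define T where "T = {(\<Sum>s\<in>S. nsmul (f s) s) | f. True}"
  have "gen_subgroup S \<subseteq> T"
  proof
    fix y assume y: "y \<in> gen_subgroup S"
    show "y \<in> T"
    proof (rule gen_sub_mem[OF y])
      show "S \<subseteq> T"
      proof
        fix s assume s: "s \<in> S"
        have "(\<Sum>t\<in>S. nsmul (if t = s then 1 else 0) t) = (\<Sum>t\<in>S. if t = s then t else 0)"
          by (rule sum.cong) auto
        also have "\<dots> = s" using S s by (simp add: sum.delta)
        finally have "(\<Sum>t\<in>S. nsmul (if t = s then 1 else 0) t) = s" .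
        then show "s \<in> T" unfolding T_def by (intro CollectI exI[of _ "\<lambda>t. if t = s then 1 else 0"]) auto
      qed
      show "0 \<in> T" unfolding T_def by (intro CollectI exI[of _ "\<lambda>_. 0"]) simp
      show "\<forall>a\<in>T. \<forall>b\<in>T. a - b \<in> T"
      proof (intro ballI)
        fix a b assume "a \<in> T" "b \<in> T"
        then obtain f g where a: "a = (\<Sum>s\<in>S. nsmul (f s) s)" and b: "b = (\<Sum>s\<in>S. nsmul (g s) s)"
          unfolding T_def by blast
        have "a - b = (\<Sum>s\<in>S. nsmul (f s) s + - nsmul (g s) s)"
          unfolding a b by (simp add: sum_subtractf)
        also have "\<dots> = (\<Sum>s\<in>S. nsmul (f s + g s * (od s - 1)) s)"
          by (simp add: ng nsmul_add)
        finally show "a - b \<in> T" unfolding T_def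
          by (intro CollectI exI[of _ "\<lambda>s. f s + g s * (od s - 1)"]) simp
      qed
    qed
  qed
  moreover have "T \<subseteq> (\<lambda>f. \<Sum>s\<in>S. nsmul (f s) s) ` PiE S (\<lambda>s. {..<od s})"
  proof
    fix y assume "y \<in> T"
    then obtain f where f: "y = (\<Sum>s\<in>S. nsmul (f s) s)" unfolding T_def by blast
    define f' where "f' = restrict (\<lambda>s. f s mod od s) S"
    have "f' \<in> PiE S (\<lambda>s. {..<od s})" unfolding f'_def using od(1) by auto
    moreover have "y = (\<Sum>s\<in>S. nsmul (f' s) s)" unfolding f f'_def
      by (intro sum.cong refl) (simp add: md[symmetric])
    ultimately show "y \<in> (\<lambda>f. \<Sum>s\<in>S. nsmul (f s) s) ` PiE S (\<lambda>s. {..<od s})" by blast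
  qed
  moreover have "finite (PiE S (\<lambda>s. {..<od s}))" using S by (intro finite_PiE) auto
  ultimately show ?thesis by (meson finite_imageI finite_subset)
qed


theorem corollary4:
  assumes "countable (UNIV :: 'g::ab_group_add set)"
  shows "(alg_cstar_unique TYPE('g) \<longleftrightarrow> locally_finite TYPE('g))
       \<and> (alg_cstar_unique TYPE('g) \<longleftrightarrow> torsion_group TYPE('g))"
proof -
  have LT: "locally_finite TYPE('g) \<longleftrightarrow> torsion_group TYPE('g)"
  proof
    assume "locally_finite TYPE('g)"
    hence "finite (gen_subgroup {x})" for x :: 'g unfolding locally_finite_def by simp
    then show "torsion_group TYPE('g)" unfolding torsion_group_def using lf_torsion by blast
  next
    assume "torsion_group TYPE('g)"
    hence tor: "\<And>x::'g. \<exists>n>0. nsmul n x = 0" unfolding torsion_group_def by blast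
    show "locally_finite TYPE('g)" unfolding locally_finite_def using torsion_lf[OF tor] by blast
  qed
  have UT: "alg_cstar_unique TYPE('g) \<longleftrightarrow> torsion_group TYPE('g)"
  proof
    assume u: "alg_cstar_unique TYPE('g)"
    show "torsion_group TYPE('g)"
    proof (rule ccontr)
      assume "\<not> torsion_group TYPE('g)"
      then obtain x :: 'g where "\<And>n. 0 < n \<Longrightarrow> nsmul n x \<noteq> 0" unfolding torsion_group_def by blast
      hence "\<not> (\<exists>!N :: ('g \<Rightarrow>\<^sub>0 complex) \<Rightarrow> real. cstar_norm N)" by (rule not_unique)
      then show False using u unfolding alg_cstar_unique_def by blast
    qed
  next
    assume "torsion_group TYPE('g)"
    hence tor: "\<And>x::'g. \<exists>n>0. nsmul n x = 0" unfolding torsion_group_def by blast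
    have "\<exists>!N :: ('g \<Rightarrow>\<^sub>0 complex) \<Rightarrow> real. cstar_norm N"
    proof (rule ex1I[of _ "NS SF"])
      show "cstar_norm (NS (SF :: ('g \<Rightarrow> complex) set))" by (rule NS_SF_cstar)
    next
      fix N :: "('g \<Rightarrow>\<^sub>0 complex) \<Rightarrow> real" assume N: "cstar_norm N"
      show "N = NS SF"
      proof
        fix a
        show "N a = NS SF a"
        proof (rule antisym)
          show "N a \<le> NS SF a" by (rule upper_bound[OF tor N])
          show "NS SF a \<le> N a"
            by (rule charset.NS_le[OF charset_SF]) (use lower_bound[OF tor N] in blast)
        qed
      qed
    qed
    then show "alg_cstar_unique TYPE('g)" unfolding alg_cstar_unique_def .
  qed
  show ?thesis using LT UT by blast
qed

end
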